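(* Let $K$ be a number field, let $X\subseteq M_d(K)$ be closed in the linear Zariski topology, let $\mathcal S=\langle X\rangle$, and let $R\subseteq\mathcal S$ be a set of completely pseudo-regular matrices. (1) If $A,B\in R$ lie in the same strongly connected component of $G(R)$, then $A\sim_{\mathcal S}B$. (2) For every $r$, the graph $G(R)$ has at most $\binom{d}{r}$ strongly connected components consisting of matrices of rank $r$.
   Context: A matrix $C$ is completely pseudo-regular if it lies in a subgroup of the multiplicative semigroup $M_d(K)$ (equivalently $\operatorname{im}C\cap\ker C=0$). $G(R)$ is the directed graph with vertex set $R$ and a directed edge $A\to B$ whenever $\ker(B)\cap\operatorname{im}(A)=0$ (loops allowed). For $P,Q\in M_d(K)$ write $P\parallel Q$ if $\operatorname{im}P=\operatorname{im}Q$ and $\ker P=\ker Q$; for $P,Q\in\mathcal S$, $P\sim_{\mathcal S}Q$ means there exist $C,D,C',D'\in\mathcal S\cup\{I\}$ with $Q\parallel DPC$ and $P\parallel D'QC'$. *)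

theory Defs
  imports "HOL-Analysis.Analysis"
begin

definition number_field_type :: "'a::field_char_0 itself \<Rightarrow> bool" where
  "number_field_type _ \<longleftrightarrow>
     (\<exists>B::'a set. finite B \<and> (\<forall>x::'a. \<exists>c::'a \<Rightarrow> rat. x = (\<Sum>b\<in>B. of_rat (c b) * b)))"

definition mscale :: "'a::field \<Rightarrow> 'a^'n^'n \<Rightarrow> 'a^'n^'n" where
  "mscale c M = (\<chi> i j. c * M $ i $ j)"

definition lin_subspace :: "('a::field^'n^'n) set \<Rightarrow> bool" where
  "lin_subspace V \<longleftrightarrow> 0 \<in> V \<and> (\<forall>M\<in>V. \<forall>N\<in>V. M + N \<in> V) \<and> (\<forall>c. \<forall>M\<in>V. mscale c M \<in> V)"

definition affine_subspace :: "('a::field^'n^'n) set \<Rightarrow> bool" where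
  "affine_subspace S \<longleftrightarrow> (\<exists>M V. lin_subspace V \<and> S = (\<lambda>N. M + N) ` V)"

definition linear_zariski_closed :: "('a::field^'n^'n) set \<Rightarrow> bool" where
  "linear_zariski_closed X \<longleftrightarrow> (\<exists>F. finite F \<and> (\<forall>S\<in>F. affine_subspace S) \<and> X = \<Union>F)"

inductive_set gen_semigroup :: "('a::field^'n^'n) set \<Rightarrow> ('a^'n^'n) set" for X where
  base: "A \<in> X \<Longrightarrow> A \<in> gen_semigroup X"
| mult: "A \<in> gen_semigroup X \<Longrightarrow> B \<in> gen_semigroup X \<Longrightarrow> A ** B \<in> gen_semigroup X"

definition mker :: "'a::field^'n^'n \<Rightarrow> ('a^'n) set" where
  "mker A = {x. A *v x = 0}"

definition mim :: "'a::field^'n^'n \<Rightarrow> ('a^'n) set" where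
  "mim A = range (\<lambda>x. A *v x)"

text \<open>\<open>C\<close> lies in a subgroup of the multiplicative semigroup \<open>M_d(K)\<close>.\<close>
definition completely_pseudo_regular :: "'a::field^'n^'n \<Rightarrow> bool" where
  "completely_pseudo_regular C \<longleftrightarrow>
     (\<exists>G::('a^'n^'n) set. C \<in> G \<and> (\<forall>A\<in>G. \<forall>B\<in>G. A ** B \<in> G) \<and>
        (\<exists>E\<in>G. \<forall>A\<in>G. E ** A = A \<and> A ** E = A \<and> (\<exists>A'\<in>G. A ** A' = E \<and> A' ** A = E)))"

definition graph_edges :: "('a::field^'n^'n) set \<Rightarrow> (('a^'n^'n) \<times> ('a^'n^'n)) set" where
  "graph_edges R = {(A, B). A \<in> R \<and> B \<in> R \<and> mker B \<inter> mim A = {0}}"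

definition same_scc :: "('a::field^'n^'n) set \<Rightarrow> 'a^'n^'n \<Rightarrow> 'a^'n^'n \<Rightarrow> bool" where
  "same_scc R A B \<longleftrightarrow> A \<in> R \<and> B \<in> R \<and> (A, B) \<in> (graph_edges R)\<^sup>* \<and> (B, A) \<in> (graph_edges R)\<^sup>*"

definition sccs :: "('a::field^'n^'n) set \<Rightarrow> ('a^'n^'n) set set" where
  "sccs R = R // {(A, B). same_scc R A B}"

definition mpar :: "'a::field^'n^'n \<Rightarrow> 'a^'n^'n \<Rightarrow> bool" where
  "mpar P Q \<longleftrightarrow> mim P = mim Q \<and> mker P = mker Q"

definition sim_S :: "('a::field^'n^'n) set \<Rightarrow> 'a^'n^'n \<Rightarrow> 'a^'n^'n \<Rightarrow> bool" where
  "sim_S S P Q \<longleftrightarrow> P \<in> S \<and> Q \<in> S \<and>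
     (\<exists>C\<in>S \<union> {mat 1}. \<exists>D\<in>S \<union> {mat 1}. \<exists>C'\<in>S \<union> {mat 1}. \<exists>D'\<in>S \<union> {mat 1}.
        mpar Q (D ** P ** C) \<and> mpar P (D' ** Q ** C'))"

end

theory Submission
  imports Defs
begin

lemma mim_subspace: "vec.subspace (mim (A::'a::field^'n^'n))"
  unfolding mim_def using vec.linear_subspace_image[OF _ vec.subspace_UNIV, of "(*v) A"]
  by (simp add: matrix_vector_mul_linear_gen image_def)

lemma mker_subspace: "vec.subspace (mker (A::'a::field^'n^'n))"
  unfolding mker_def by (rule vec.subspace_kernel)

lemma zero_mim[simp]: "0 \<in> mim A" unfolding mim_def
  by (metis matrix_vector_mult_0_right rangeI)
lemma zero_mker[simp]: "0 \<in> mker A" unfolding mker_def by simp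

lemma rank_nullity_gen:
  fixes A :: "'a::field^'n^'n"
  shows "vec.dim (mim A) + vec.dim (mker A) = CARD('n)"
proof -
  let ?K = "mker A"
  obtain BK where BK: "BK \<subseteq> ?K" "vec.independent BK" "?K \<subseteq> vec.span BK" "card BK = vec.dim ?K"
    using vec.basis_exists[of ?K] by metis
  obtain B where B: "BK \<subseteq> B" "B \<subseteq> UNIV" "vec.independent B" "UNIV \<subseteq> vec.span B"
    by (rule vec.maximal_independent_subset_extend[OF subset_UNIV BK(2)])
  have finB: "finite B" using B(3) by (rule vec.finiteI_independent)
  have cardB: "card B = CARD('n)"
    using vec.basis_card_eq_dim[OF subset_UNIV B(4) B(3)] vec_dim_card by simp
  define C where "C = B - BK"
  have indC: "vec.independent C" unfolding C_def by (rule vec.independent_mono[OF B(3)]) auto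
  have cardC: "card C = CARD('n) - card BK"
    unfolding C_def using card_Diff_subset[OF finite_subset[OF B(1) finB] B(1)] cardB by simp
  let ?S = "vec.span C"
  have subS: "vec.subspace ?S" by (rule vec.subspace_span)
  have sums: "{x + y |x y. x \<in> ?K \<and> y \<in> ?S} = UNIV"
  proof -
    have ss: "vec.subspace {x + y |x y. x \<in> ?K \<and> y \<in> ?S}"
      by (rule vec.subspace_sums[OF mker_subspace subS])
    have "B \<subseteq> {x + y |x y. x \<in> ?K \<and> y \<in> ?S}"
    proof
      fix b assume b: "b \<in> B"
      show "b \<in> {x + y |x y. x \<in> ?K \<and> y \<in> ?S}"
      proof (cases "b \<in> BK")
        case True
        then have "b = b + 0 \<and> b \<in> ?K \<and> 0 \<in> ?S" using BK(1) vec.span_zero by auto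
        then show ?thesis by blast
      next
        case False
        have "b \<in> C" using b False C_def by auto
        then have "b = 0 + b \<and> 0 \<in> ?K \<and> b \<in> ?S" using vec.span_base by auto
        then show ?thesis by blast
      qed
    qed
    then have "vec.span B \<subseteq> {x + y |x y. x \<in> ?K \<and> y \<in> ?S}"
      using vec.span_minimal[OF _ ss] by blast
    then show ?thesis using B(4) by blast
  qed
  have dK: "vec.dim ?K = card BK" using BK(4) by simp
  have dS: "vec.dim ?S = card C" using vec.dim_span_eq_card_independent[OF indC] .
  have "vec.dim (UNIV::('a^'n) set) + vec.dim (?K \<inter> ?S) = vec.dim ?K + vec.dim ?S"
    using vec.dim_sums_Int[OF mker_subspace[of A] subS] unfolding sums .
  moreover have cBK: "card BK \<le> CARD('n)"
    using cardB card_mono[OF finB B(1)] by linarith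
  ultimately have "vec.dim (?K \<inter> ?S) = 0" unfolding dK dS cardC vec_dim_card by linarith
  then have KS: "?K \<inter> ?S \<subseteq> {0}" by simp
  have lin: "Vector_Spaces.linear (*s) (*s) ((*v) A)" by (rule matrix_vector_mul_linear_gen)
  have inj: "inj_on ((*v) A) (vec.span ?S)"
  proof (rule inj_onI)
    fix x y assume xy: "x \<in> vec.span ?S" "y \<in> vec.span ?S" "A *v x = A *v y"
    then have "x - y \<in> ?S" using vec.span_diff by (simp add: vec.span_span)
    moreover have "x - y \<in> ?K" using xy(3) unfolding mker_def
      by (simp add: matrix_vector_mult_diff_distrib)
    ultimately show "x = y" using KS by auto
  qed
  have img: "(*v) A ` ?S = mim A"
  proof
    show "(*v) A ` ?S \<subseteq> mim A" unfolding mim_def by auto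
    show "mim A \<subseteq> (*v) A ` ?S"
    proof
      fix z assume "z \<in> mim A"
      then obtain x where z: "z = A *v x" unfolding mim_def by auto
      have "x \<in> {x + y |x y. x \<in> ?K \<and> y \<in> ?S}" using sums by simp
      then obtain k s where ks: "x = k + s" "k \<in> ?K" "s \<in> ?S" by blast
      have "z = A *v s" using z ks unfolding mker_def by (simp add: matrix_vector_right_distrib)
      then show "z \<in> (*v) A ` ?S" using ks by blast
    qed
  qed
  have "vec.dim (mim A) = card C"
    using vec.dim_image_eq[OF lin inj] img dS by simp
  then show ?thesis using dK cardC cBK by linarith
qed

lemma dim_rows_le_columns:
  fixes A :: "'a::field^'n^'m"
  shows "vec.dim (rows A) \<le> vec.dim (columns A)"
proof -
  obtain Bc where Bc: "Bc \<subseteq> columns A" "vec.independent Bc" "columns A \<subseteq> vec.span Bc"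
      "card Bc = vec.dim (columns A)"
    using vec.basis_exists[of "columns A"] by metis
  have fin: "finite Bc" using Bc(2) by (rule vec.finiteI_independent)
  have "\<forall>j. \<exists>u. column j A = (\<Sum>v\<in>Bc. u v *s v)"
  proof
    fix j
    have "column j A \<in> vec.span Bc" using Bc(3) unfolding columns_def by auto
    then show "\<exists>u. column j A = (\<Sum>v\<in>Bc. u v *s v)" using vec.span_finite[OF fin] by auto
  qed
  then obtain u where u: "\<And>j. column j A = (\<Sum>v\<in>Bc. u j v *s v)" by metis
  define Rv where "Rv v = (\<chi> j. u j v)" for v
  have rowi: "row i A = (\<Sum>v\<in>Bc. (v $ i) *s Rv v)" for i
  proof -
    have "(row i A) $ k = (\<Sum>v\<in>Bc. (v $ i) *s Rv v) $ k" for k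
    proof -
      have "(row i A) $ k = (column k A) $ i" by (simp add: row_def column_def)
      also have "\<dots> = (\<Sum>v\<in>Bc. u k v * v $ i)" unfolding u by (simp add: sum_component)
      also have "\<dots> = (\<Sum>v\<in>Bc. (v $ i) *s Rv v) $ k" by (simp add: sum_component Rv_def mult.commute)
      finally show ?thesis .
    qed
    then show ?thesis by (simp add: vec_eq_iff)
  qed
  have "rows A \<subseteq> vec.span (Rv ` Bc)"
  proof -
    have "row i A \<in> vec.span (Rv ` Bc)" for i
      unfolding rowi by (intro vec.span_sum vec.span_scale) (auto intro: vec.span_base)
    then show ?thesis unfolding rows_def by auto
  qed
  then have "vec.dim (rows A) \<le> card (Rv ` Bc)" by (rule vec.dim_le_card) (simp add: fin)
  also have "\<dots> \<le> card Bc" by (rule card_image_le[OF fin])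
  finally show ?thesis using Bc(4) by simp
qed

lemma column_eq_mult_axis: "column j (A::'a::field^'n^'m) = A *v axis j 1"
  by (simp add: vec_eq_iff matrix_vector_mult_def axis_def column_def if_distrib cong: if_cong)

lemma span_columns_mim: "vec.span (columns (A::'a::field^'n^'n)) = mim A"
proof
  show "vec.span (columns A) \<subseteq> mim A"
    by (rule vec.span_minimal[OF _ mim_subspace]) (auto simp: columns_def mim_def column_eq_mult_axis)
  show "mim A \<subseteq> vec.span (columns A)"
    unfolding mim_def using matrix_vector_mult_in_columnspace_gen by auto
qed

lemma rank_dim_mim: "rank (A::'a::field^'n^'n) = vec.dim (mim A)"
proof -
  have "vec.dim (rows A) = vec.dim (columns A)"
    using dim_rows_le_columns[of A] dim_rows_le_columns[of "transpose A"] by simp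
  then show ?thesis unfolding row_rank_def_gen
    by (metis span_columns_mim vec.dim_span)
qed

lemma gs_closed:
  "A \<in> gen_semigroup X \<union> {mat 1} \<Longrightarrow> B \<in> gen_semigroup X \<union> {mat 1} \<Longrightarrow>
   A ** B \<in> gen_semigroup X \<union> {mat 1}"
  by (auto simp: matrix_mul_lid matrix_mul_rid intro: gen_semigroup.mult)

lemma edge_inj:
  assumes "(U, V) \<in> graph_edges R" "x \<in> mim U" "V *v x = 0"
  shows "x = 0"
  using assms unfolding graph_edges_def mker_def by auto

lemma walk_C:
  assumes "(U, V) \<in> (graph_edges R)\<^sup>*" "R \<subseteq> gen_semigroup X"
  shows "\<exists>C \<in> gen_semigroup X \<union> {mat 1}. mker (V ** C) = mker U"
  using assms(1)
proof (induction rule: rtrancl_induct)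
  case base
  show ?case by (intro bexI[of _ "mat 1"]) (simp_all add: matrix_mul_rid)
next
  case (step y z)
  from step.IH obtain C where C: "C \<in> gen_semigroup X \<union> {mat 1}" "mker (y ** C) = mker U"
    by blast
  have yR: "y \<in> R" using step.hyps(2) unfolding graph_edges_def by auto
  have yC: "y ** C \<in> gen_semigroup X \<union> {mat 1}"
    using gs_closed[OF _ C(1), of y] yR assms(2) by auto
  have "mker (z ** (y ** C)) = mker (y ** C)"
  proof -
    have "(z ** (y ** C)) *v x = 0 \<longleftrightarrow> (y ** C) *v x = 0" for x
    proof
      assume h: "(z ** (y ** C)) *v x = 0"
      have "(y ** C) *v x \<in> mim y" unfolding mim_def
        by (metis matrix_vector_mul_assoc rangeI)
      moreover have "z *v ((y ** C) *v x) = 0" using h by (simp add: matrix_vector_mul_assoc)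
      ultimately show "(y ** C) *v x = 0" using edge_inj[OF step.hyps(2)] by blast
    next
      assume "(y ** C) *v x = 0"
      then show "(z ** (y ** C)) *v x = 0"
        by (metis matrix_vector_mul_assoc matrix_vector_mult_0_right)
    qed
    then show ?thesis unfolding mker_def by auto
  qed
  then show ?case using yC C(2) by auto
qed

lemma walk_D:
  assumes "(U, V) \<in> (graph_edges R)\<^sup>*" "R \<subseteq> gen_semigroup X"
  shows "\<exists>D \<in> gen_semigroup X \<union> {mat 1}. mker (D ** U) = mker U \<and> mim (D ** U) \<subseteq> mim V"
  using assms(1)
proof (induction rule: rtrancl_induct)
  case base
  show ?case by (intro bexI[of _ "mat 1"]) (simp_all add: matrix_mul_lid)
next
  case (step y z)
  from step.IH obtain D where D: "D \<in> gen_semigroup X \<union> {mat 1}" "mker (D ** U) = mker U"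
     "mim (D ** U) \<subseteq> mim y"
    by blast
  have zR: "z \<in> R" using step.hyps(2) unfolding graph_edges_def by auto
  have zD: "z ** D \<in> gen_semigroup X \<union> {mat 1}"
    using gs_closed[OF _ D(1), of z] zR assms(2) by auto
  have "(z ** D ** U) *v x = 0 \<longleftrightarrow> (D ** U) *v x = 0" for x
  proof
    assume h: "(z ** D ** U) *v x = 0"
    have "(D ** U) *v x \<in> mim y" using D(3) unfolding mim_def by auto
    moreover have "z *v ((D ** U) *v x) = 0" using h by (simp add: matrix_vector_mul_assoc matrix_mul_assoc)
    ultimately show "(D ** U) *v x = 0" using edge_inj[OF step.hyps(2)] by blast
  next
    assume "(D ** U) *v x = 0"
    then show "(z ** D ** U) *v x = 0"
      by (metis matrix_vector_mul_assoc matrix_vector_mult_0_right matrix_mul_assoc)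
  qed
  then have "mker (z ** D ** U) = mker U" using D(2) unfolding mker_def by auto
  moreover have "mim (z ** D ** U) \<subseteq> mim z" unfolding mim_def
    by (auto simp: matrix_mul_assoc simp flip: matrix_vector_mul_assoc)
  ultimately show ?case using zD by auto
qed

lemma part1_dir:
  assumes "same_scc R A B" "R \<subseteq> gen_semigroup X"
  shows "\<exists>C\<in>gen_semigroup X \<union> {mat 1}. \<exists>D\<in>gen_semigroup X \<union> {mat 1}. mpar B (D ** A ** C)"
proof -
  have BA: "(B, A) \<in> (graph_edges R)\<^sup>*" and AB: "(A, B) \<in> (graph_edges R)\<^sup>*"
    using assms(1) unfolding same_scc_def by auto
  obtain C where C: "C \<in> gen_semigroup X \<union> {mat 1}" "mker (A ** C) = mker B"
    using walk_C[OF BA assms(2)] by blast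
  obtain D where D: "D \<in> gen_semigroup X \<union> {mat 1}" "mker (D ** A) = mker A" "mim (D ** A) \<subseteq> mim B"
    using walk_D[OF AB assms(2)] by blast
  let ?W = "D ** A ** C"
  have kerW: "mker ?W = mker B"
  proof -
    have "?W *v x = 0 \<longleftrightarrow> (A ** C) *v x = 0" for x
    proof -
      have "?W *v x = (D ** A) *v (C *v x)" by (simp add: matrix_vector_mul_assoc)
      moreover have "(A ** C) *v x = A *v (C *v x)" by (simp add: matrix_vector_mul_assoc)
      moreover have "(D ** A) *v y = 0 \<longleftrightarrow> A *v y = 0" for y
        using D(2) unfolding mker_def by auto
      ultimately show ?thesis by simp
    qed
    then show ?thesis using C(2) unfolding mker_def by auto
  qed
  have imW: "mim ?W \<subseteq> mim B"
  proof -
    have "mim ?W \<subseteq> mim (D ** A)" unfolding mim_def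
      by (auto simp flip: matrix_vector_mul_assoc)
    then show ?thesis using D(3) by auto
  qed
  have "vec.dim (mim B) \<le> vec.dim (mim ?W)"
    using rank_nullity_gen[of B] rank_nullity_gen[of ?W] kerW by simp
  then have "mim ?W = mim B" by (rule vec.subspace_dim_equal[OF mim_subspace mim_subspace imW])
  then show ?thesis using kerW C(1) D(1) unfolding mpar_def by blast
qed

lemma part1:
  assumes "same_scc R A B" "R \<subseteq> gen_semigroup X"
  shows "sim_S (gen_semigroup X) A B"
proof -
  have BA: "same_scc R B A" using assms(1) unfolding same_scc_def by auto
  have mem: "A \<in> gen_semigroup X" "B \<in> gen_semigroup X" using assms unfolding same_scc_def by auto
  show ?thesis unfolding sim_S_def using mem part1_dir[OF assms] part1_dir[OF BA assms(2)] by blast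
qed

definition Mx :: "'n set \<Rightarrow> ('n \<Rightarrow> 'a^'n) \<Rightarrow> ('n \<Rightarrow> 'a^'n) \<Rightarrow> 'a::field^'n^'n" where
  "Mx J x w = (\<chi> j. if j \<in> J then x j else w j)"

definition alt_form :: "'n::finite set \<Rightarrow> (('n \<Rightarrow> 'a::field^'n) \<Rightarrow> 'a) \<Rightarrow> bool" where
  "alt_form J f \<longleftrightarrow> (\<forall>x y. (\<forall>j\<in>J. x j = y j) \<longrightarrow> f x = f y) \<and>
     (\<forall>x t a b. t \<in> J \<longrightarrow> f (x(t := a + b)) = f (x(t := a)) + f (x(t := b))) \<and>
     (\<forall>x t c a. t \<in> J \<longrightarrow> f (x(t := c *s a)) = c * f (x(t := a))) \<and>
     (\<forall>x i j. i \<in> J \<longrightarrow> j \<in> J \<longrightarrow> i \<noteq> j \<longrightarrow> x i = x j \<longrightarrow> f x = 0) \<and>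
     (\<forall>x p. p permutes J \<longrightarrow> f (x \<circ> p) = of_int (sign p) * f x)"

lemma Mx_upd: "t \<in> J \<Longrightarrow> Mx J (x(t := v)) w = (\<chi> i. if i = t then v else (if i \<in> J then x i else w i))"
  by (auto simp: Mx_def vec_eq_iff)

lemma row_Mx: "row i (Mx J x w) = (if i \<in> J then x i else w i)"
  by (simp add: row_def Mx_def vec_lambda_eta)

lemma alt_det: "alt_form J (\<lambda>x. det (Mx J x w))"
  unfolding alt_form_def
proof (intro conjI allI impI)
  fix x y :: "'a \<Rightarrow> 'b^'a" assume "\<forall>j\<in>J. x j = y j"
  then have "Mx J x w = Mx J y w" by (simp add: Mx_def vec_eq_iff)
  then show "det (Mx J x w) = det (Mx J y w)" by simp
next
  fix x :: "'a \<Rightarrow> 'b^'a" and t a b assume t: "t \<in> J"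
  show "det (Mx J (x(t := a + b)) w) = det (Mx J (x(t := a)) w) + det (Mx J (x(t := b)) w)"
    unfolding Mx_upd[OF t] using det_row_add[of t "\<lambda>_. a" "\<lambda>_. b" "\<lambda>i. if i \<in> J then x i else w i"]
    by simp
next
  fix x :: "'a \<Rightarrow> 'b^'a" and t c a assume t: "t \<in> J"
  show "det (Mx J (x(t := c *s a)) w) = c * det (Mx J (x(t := a)) w)"
    unfolding Mx_upd[OF t] using det_row_mul[of t c "\<lambda>_. a" "\<lambda>i. if i \<in> J then x i else w i"]
    by simp
next
  fix x :: "'a \<Rightarrow> 'b^'a" and i j assume "i \<in> J" "j \<in> J" "i \<noteq> j" "x i = x j"
  then show "det (Mx J x w) = 0"
    by (intro det_identical_rows[of i j]) (auto simp: row_Mx)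
next
  fix x :: "'a \<Rightarrow> 'b^'a" and p assume p: "p permutes J"
  have pU: "p permutes UNIV" using permutes_subset[OF p subset_UNIV] .
  have "Mx J (x \<circ> p) w = (\<chi> i. Mx J x w $ p i)"
    using p by (auto simp: Mx_def vec_eq_iff permutes_in_image permutes_not_in)
  then show "det (Mx J (x \<circ> p) w) = of_int (sign p) * det (Mx J x w)"
    using det_permute_rows[OF pU, of "Mx J x w"] by simp
qed

lemma alt_sum:
  fixes g :: "'m \<Rightarrow> ('n::finite \<Rightarrow> 'a::field^'n) \<Rightarrow> 'a"
  assumes "\<forall>A\<in>T. alt_form J (g A)"
  shows "alt_form J (\<lambda>x. \<Sum>A\<in>T. c A * g A x)"
  unfolding alt_form_def
proof (intro conjI allI impI)
  fix x y :: "'n \<Rightarrow> 'a^'n" assume h: "\<forall>j\<in>J. x j = y j"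
  show "(\<Sum>A\<in>T. c A * g A x) = (\<Sum>A\<in>T. c A * g A y)"
    by (rule sum.cong) (use assms h in \<open>auto simp: alt_form_def\<close>)
next
  fix x :: "'n \<Rightarrow> 'a^'n" and t a b assume t: "t \<in> J"
  have "(\<Sum>A\<in>T. c A * g A (x(t := a + b))) = (\<Sum>A\<in>T. c A * g A (x(t := a)) + c A * g A (x(t := b)))"
    by (rule sum.cong) (use assms t in \<open>auto simp: alt_form_def distrib_left\<close>)
  then show "(\<Sum>A\<in>T. c A * g A (x(t := a + b))) = (\<Sum>A\<in>T. c A * g A (x(t := a))) + (\<Sum>A\<in>T. c A * g A (x(t := b)))"
    by (simp add: sum.distrib)
next
  fix x :: "'n \<Rightarrow> 'a^'n" and t d a assume t: "t \<in> J"
  have "(\<Sum>A\<in>T. c A * g A (x(t := d *s a))) = (\<Sum>A\<in>T. d * (c A * g A (x(t := a))))"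
    by (rule sum.cong) (use assms t in \<open>auto simp: alt_form_def mult.left_commute\<close>)
  then show "(\<Sum>A\<in>T. c A * g A (x(t := d *s a))) = d * (\<Sum>A\<in>T. c A * g A (x(t := a)))"
    by (simp add: sum_distrib_left)
next
  fix x :: "'n \<Rightarrow> 'a^'n" and i j assume h: "i \<in> J" "j \<in> J" "i \<noteq> j" "x i = x j"
  show "(\<Sum>A\<in>T. c A * g A x) = 0"
    by (rule sum.neutral) (use assms h in \<open>auto simp: alt_form_def\<close>)
next
  fix x :: "'n \<Rightarrow> 'a^'n" and p assume p: "p permutes J"
  have "(\<Sum>A\<in>T. c A * g A (x \<circ> p)) = (\<Sum>A\<in>T. of_int (sign p) * (c A * g A x))"
    by (rule sum.cong) (use assms p in \<open>auto simp: alt_form_def mult.left_commute\<close>)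
  then show "(\<Sum>A\<in>T. c A * g A (x \<circ> p)) = of_int (sign p) * (\<Sum>A\<in>T. c A * g A x)"
    by (simp add: sum_distrib_left)
qed

lemma alt_a: "alt_form J f \<Longrightarrow> (\<forall>j\<in>J. x j = y j) \<Longrightarrow> f x = f y"
  unfolding alt_form_def by (drule conjunct1) (erule allE, erule allE, erule mp)
lemma alt_add: "alt_form J f \<Longrightarrow> t \<in> J \<Longrightarrow> f (x(t := a + b)) = f (x(t := a)) + f (x(t := b))"
  unfolding alt_form_def by (drule conjunct2, drule conjunct1) (erule allE, erule allE, erule allE, erule allE, erule mp)
lemma alt_mul: "alt_form J f \<Longrightarrow> t \<in> J \<Longrightarrow> f (x(t := c *s a)) = c * f (x(t := a))"
  unfolding alt_form_def by (drule conjunct2, drule conjunct2, drule conjunct1) (erule allE, erule allE, erule allE, erule allE, erule mp)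
lemma alt_c: "alt_form J f \<Longrightarrow> i \<in> J \<Longrightarrow> j \<in> J \<Longrightarrow> i \<noteq> j \<Longrightarrow> x i = x j \<Longrightarrow> f x = 0"
  unfolding alt_form_def by (drule conjunct2, drule conjunct2, drule conjunct2, drule conjunct1) (erule allE[of _ x], erule allE[of _ i], erule allE[of _ j], simp)
lemma alt_d: "alt_form J f \<Longrightarrow> p permutes J \<Longrightarrow> f (x \<circ> p) = of_int (sign p) * f x"
  unfolding alt_form_def by (drule conjunct2, drule conjunct2, drule conjunct2, drule conjunct2) (erule allE, erule allE, erule mp)

lemma alt_lin_sum:
  assumes "alt_form J f" "t \<in> J" "finite I"
  shows "f (x(t := \<Sum>i\<in>I. c i *s v i)) = (\<Sum>i\<in>I. c i * f (x(t := v i)))"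
  using assms(3)
proof (induction I rule: finite_induct)
  case empty
  have "f (x(t := 0)) = f (x(t := (0::'b) *s 0))" by simp
  also have "\<dots> = 0 * f (x(t := 0))" by (rule alt_mul[OF assms(1,2)])
  finally have "f (x(t := 0)) = 0" by simp
  then show ?case by (simp only: sum.empty)
next
  case (insert i I)
  have "(\<Sum>i\<in>insert i I. c i *s v i) = c i *s v i + (\<Sum>i\<in>I. c i *s v i)"
    using insert(1,2) by (rule sum.insert)
  then have "f (x(t := \<Sum>i\<in>insert i I. c i *s v i)) = f (x(t := c i *s v i + (\<Sum>i\<in>I. c i *s v i)))"
    by (simp only:)
  also have "\<dots> = f (x(t := c i *s v i)) + f (x(t := (\<Sum>i\<in>I. c i *s v i)))"
    by (rule alt_add[OF assms(1,2)])
  also have "f (x(t := c i *s v i)) = c i * f (x(t := v i))"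
    by (rule alt_mul[OF assms(1,2)])
  also have "f (x(t := (\<Sum>i\<in>I. c i *s v i))) = (\<Sum>i\<in>I. c i * f (x(t := v i)))"
    by (rule insert.IH)
  also have "c i * f (x(t := v i)) + (\<Sum>i\<in>I. c i * f (x(t := v i))) = (\<Sum>i\<in>insert i I. c i * f (x(t := v i)))"
    using insert(1,2) by (rule sum.insert[symmetric])
  finally show ?case .
qed

lemma alt_zero:
  fixes f :: "('n::finite \<Rightarrow> 'a::field^'n) \<Rightarrow> 'a"
  assumes alt: "alt_form J f"
    and z: "\<And>S. card S = card J \<Longrightarrow> f (\<lambda>j. axis ((SOME k. bij_betw k J S) j) 1) = 0"
  shows "f x = 0"
proof -
  have a: "\<And>x y. (\<forall>j\<in>J. x j = y j) \<Longrightarrow> f x = f y" by (rule alt_a[OF alt])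
  have c: "\<And>x i j. i \<in> J \<Longrightarrow> j \<in> J \<Longrightarrow> i \<noteq> j \<Longrightarrow> x i = x j \<Longrightarrow> f x = 0"
    by (rule alt_c[OF alt])
  have d: "\<And>x p. p permutes J \<Longrightarrow> f (x \<circ> p) = of_int (sign p) * f x" by (rule alt_d[OF alt])
  have key: "T \<subseteq> J \<Longrightarrow> \<forall>x. (\<forall>j\<in>J - T. \<exists>i. x j = axis i 1) \<longrightarrow> f x = 0" if fT: "finite T" for T
    using fT
  proof (induction T rule: finite_induct)
    case empty
    show ?case
    proof (intro allI impI)
      fix x :: "'n \<Rightarrow> 'a^'n" assume hx: "\<forall>j\<in>J - {}. \<exists>i. x j = axis i 1"
      define k where "k j = (SOME i. x j = axis i 1)" for j
      have xk: "x j = axis (k j) 1" if "j \<in> J" for j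
      proof -
        have "\<exists>i. x j = axis i 1" using hx that by simp
        then show ?thesis unfolding k_def by (rule someI_ex)
      qed
      show "f x = 0"
      proof (cases "inj_on k J")
        case False
        then obtain i j where "i \<in> J" "j \<in> J" "i \<noteq> j" "k i = k j" unfolding inj_on_def by blast
        then have "x i = x j" using xk by simp
        then show ?thesis by (rule c[OF \<open>i \<in> J\<close> \<open>j \<in> J\<close> \<open>i \<noteq> j\<close>])
      next
        case True
        define S where "S = k ` J"
        have cS: "card S = card J" unfolding S_def using card_image[OF True] .
        define g where "g = (SOME k. bij_betw k J S)"
        have "\<exists>k. bij_betw k J S" by (rule finite_same_card_bij[OF finite finite cS[symmetric]])
        then have g: "bij_betw g J S" unfolding g_def by (rule someI_ex)
        define p where "p j = (if j \<in> J then inv_into J g (k j) else j)" for j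
        have kb: "bij_betw k J S" unfolding S_def using True by (simp add: bij_betw_imageI)
        have "bij_betw (inv_into J g \<circ> k) J J"
          by (rule bij_betw_trans[OF kb bij_betw_inv_into[OF g]])
        then have "bij_betw p J J" by (rule bij_betw_cong[THEN iffD1, rotated]) (simp add: p_def)
        then have p: "p permutes J" by (rule bij_imp_permutes) (simp add: p_def)
        define y where "y j = axis (g j) (1::'a)" for j
        have "\<forall>j\<in>J. x j = (y \<circ> p) j"
        proof
          fix j assume j: "j \<in> J"
          have "k j \<in> g ` J" using bij_betw_imp_surj_on[OF g] j unfolding S_def by simp
          then have "g (inv_into J g (k j)) = k j" by (rule f_inv_into_f)
          then show "x j = (y \<circ> p) j" using j xk by (simp add: y_def p_def)
        qed
        then have "f x = f (y \<circ> p)" by (rule a)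
        also have "\<dots> = of_int (sign p) * f y" by (rule d[OF p])
        also have "f y = 0" using z[OF cS] unfolding y_def g_def .
        finally show ?thesis by simp
      qed
    qed
  next
    case (insert t T)
    show ?case
    proof (intro allI impI)
      fix x :: "'n \<Rightarrow> 'a^'n" assume hx: "\<forall>j\<in>J - insert t T. \<exists>i. x j = axis i 1"
      have tJ: "t \<in> J" using insert by auto
      have be: "(\<Sum>i\<in>UNIV. (x t $ i) *s axis i 1) = x t" by (rule basis_expansion)
      have "f x = f (x(t := \<Sum>i\<in>UNIV. (x t $ i) *s axis i 1))" unfolding be by simp
      also have "\<dots> = (\<Sum>i\<in>UNIV. (x t $ i) * f (x(t := axis i 1)))"
        by (rule alt_lin_sum[OF alt tJ]) simp
      also have "\<dots> = 0"
      proof (rule sum.neutral, intro ballI)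
        fix i
        have "\<forall>j\<in>J - T. \<exists>i'. (x(t := axis i 1)) j = axis i' 1"
        proof
          fix j assume j: "j \<in> J - T"
          show "\<exists>i'. (x(t := axis i 1)) j = axis i' 1"
          proof (cases "j = t")
            case True then show ?thesis by auto
          next
            case False then have "j \<in> J - insert t T" using j by auto
            then show ?thesis using hx False by auto
          qed
        qed
        then have "f (x(t := axis i 1)) = 0" using insert.IH insert.prems by auto
        then show "x t $ i * f (x(t := axis i 1)) = 0" by simp
      qed
      finally show "f x = 0" .
    qed
  qed
  show ?thesis using key[of J] by simp
qed

definition plk :: "'n::finite set \<Rightarrow> (('n \<Rightarrow> 'a::field^'n) \<Rightarrow> 'a) \<Rightarrow> 'a^('n set)" where
  "plk J f = (\<chi> S. if card S = card J then f (\<lambda>j. axis ((SOME k. bij_betw k J S) j) 1) else 0)"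

lemma plk_zero:
  assumes "alt_form J f" "plk J f = 0"
  shows "f x = 0"
proof (rule alt_zero[OF assms(1)])
  fix S :: "'a set" assume "card S = card J"
  then show "f (\<lambda>j. axis ((SOME k. bij_betw k J S) j) 1) = 0"
    using arg_cong[OF assms(2), of "\<lambda>v. v $ S"] by (simp add: plk_def)
qed

lemma plk_sum:
  "plk J (\<lambda>x. \<Sum>A\<in>T. c A * g A x) = (\<Sum>A\<in>T. c A *s plk J (g A))"
  by (simp add: vec_eq_iff plk_def sum_component)

lemma plk_span:
  fixes f :: "('n::finite \<Rightarrow> 'a::field^'n) \<Rightarrow> 'a" and J :: "'n set"
  shows "plk J f \<in> vec.span ((\<lambda>S. axis S 1) ` {S. card S = card J})"
proof -
  let ?v = "plk J f"
  have "?v = (\<Sum>S\<in>UNIV. (?v $ S) *s axis S 1)" by (simp add: basis_expansion)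
  also have "\<dots> \<in> vec.span ((\<lambda>S. axis S 1) ` {S. card S = card J})"
  proof (rule vec.span_sum)
    fix S :: "'n set"
    show "(?v $ S) *s axis S 1 \<in> vec.span ((\<lambda>S. axis S 1) ` {S. card S = card J})"
    proof (cases "card S = card J")
      case True
      then show ?thesis by (intro vec.span_scale vec.span_base) auto
    next
      case False
      then have "?v $ S = 0" by (simp add: plk_def)
      then show ?thesis by (simp add: vec.span_zero)
    qed
  qed
  finally show ?thesis .
qed

lemma card_axes:
  "card ((\<lambda>S. axis S (1::'a::field)) ` {S::'n::finite set. card S = r}) \<le> CARD('n) choose r"
proof -
  have "card ((\<lambda>S. axis S (1::'a)) ` {S::'n set. card S = r}) \<le> card {S::'n set. card S = r}"
    by (rule card_image_le) simp
  moreover have "card {S::'n set. card S = r} = CARD('n) choose r"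
    using n_subsets[of "UNIV::'n set" r] by simp
  ultimately show ?thesis by simp
qed

lemma indexed_basis:
  fixes V :: "('a::field^'n) set"
  assumes "vec.subspace V" "vec.dim V = card I" "finite I"
  shows "\<exists>b. (\<forall>i\<in>I. b i \<in> V) \<and> V \<subseteq> vec.span (b ` I) \<and> inj_on b I \<and>
     (\<forall>c. (\<Sum>i\<in>I. c i *s b i) = 0 \<longrightarrow> (\<forall>i\<in>I. c i = 0))"
proof -
  obtain B where B: "B \<subseteq> V" "vec.independent B" "V \<subseteq> vec.span B" "card B = vec.dim V"
    using vec.basis_exists[of V] by metis
  have finB: "finite B" using B(2) by (rule vec.finiteI_independent)
  obtain h where h: "bij_betw h I B"
    using finite_same_card_bij[OF assms(3) finB] B(4) assms(2) by auto
  have hI: "h ` I = B" using h by (simp add: bij_betw_def)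
  have inj: "inj_on h I" using h by (simp add: bij_betw_def)
  have ind: "\<forall>i\<in>I. c i = 0" if c: "(\<Sum>i\<in>I. c i *s h i) = 0" for c
  proof -
    have "(\<Sum>v\<in>B. c (inv_into I h v) *s v) = (\<Sum>i\<in>I. c (inv_into I h (h i)) *s h i)"
      by (rule sum.reindex_bij_betw[OF h, symmetric])
    also have "\<dots> = (\<Sum>i\<in>I. c i *s h i)"
      by (rule sum.cong) (simp_all add: inv_into_f_f[OF inj])
    finally have "(\<Sum>v\<in>B. c (inv_into I h v) *s v) = 0" using c by simp
    moreover have h2: "\<forall>c. (\<Sum>v\<in>B. c v *s v) = 0 \<longrightarrow> (\<forall>v\<in>B. c v = 0)"
      using B(2) vec.independent_explicit by blast
    ultimately have "\<forall>v\<in>B. c (inv_into I h v) = 0"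
      using h2[rule_format, of "\<lambda>v. c (inv_into I h v)"] by simp
    then show ?thesis using hI inv_into_f_f[OF inj] by force
  qed
  show ?thesis
    by (rule exI[of _ h]) (use B hI inj ind in auto)
qed

lemma span_indexed:
  assumes "inj_on b I" "finite I" "v \<in> vec.span (b ` I)"
  shows "\<exists>\<alpha>. v = (\<Sum>i\<in>I. \<alpha> i *s b i)"
proof -
  obtain u where "v = (\<Sum>x\<in>b ` I. u x *s x)"
    using assms(3) vec.span_finite[of "b ` I"] assms(2) by auto
  also have "\<dots> = (\<Sum>i\<in>I. u (b i) *s b i)"
    by (simp add: sum.reindex[OF assms(1)])
  finally show ?thesis by (intro exI[of _ "\<lambda>i. u (b i)"])
qed

lemma row_sum_split:
  "(\<Sum>i\<in>UNIV. c i *s row i (Mx J x w)) =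
   (\<Sum>i\<in>J. c i *s x i) + (\<Sum>i\<in>UNIV - J. c i *s w i)"
proof -
  have "(\<Sum>i\<in>UNIV. c i *s row i (Mx J x w)) =
        (\<Sum>i\<in>UNIV - J. c i *s row i (Mx J x w)) + (\<Sum>i\<in>J. c i *s row i (Mx J x w))"
    by (rule sum.subset_diff) auto
  also have "(\<Sum>i\<in>UNIV - J. c i *s row i (Mx J x w)) = (\<Sum>i\<in>UNIV - J. c i *s w i)"
    by (rule sum.cong) (auto simp: row_Mx)
  also have "(\<Sum>i\<in>J. c i *s row i (Mx J x w)) = (\<Sum>i\<in>J. c i *s x i)"
    by (rule sum.cong) (auto simp: row_Mx)
  finally show ?thesis by (simp add: add.commute)
qed

lemma det_zero_if_dep:
  fixes A :: "'a::field^'n^'n"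
  assumes "(\<Sum>i\<in>UNIV. c i *s row i A) = 0" "c i0 \<noteq> 0"
  shows "det A = 0"
proof -
  have "\<not> (\<exists>B. A ** B = mat 1)"
    unfolding matrix_right_invertible_independent_rows using assms by blast
  then have "\<not> invertible A" unfolding invertible_right_inverse by blast
  then show ?thesis using invertible_det_nz by blast
qed

lemma dep_if_det_zero:
  fixes A :: "'a::field^'n^'n"
  assumes "det A = 0"
  shows "\<exists>c i0. (\<Sum>i\<in>UNIV. c i *s row i A) = 0 \<and> c i0 \<noteq> 0"
proof -
  have "\<not> invertible A" using invertible_det_nz assms by blast
  then have "\<not> (\<exists>B. A ** B = mat 1)" unfolding invertible_right_inverse by blast
  then show ?thesis unfolding matrix_right_invertible_independent_rows by blast
qed

lemma det_Mx_nz: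
  fixes b w :: "'n::finite \<Rightarrow> 'a::field^'n"
  assumes U: "vec.subspace U" and W: "vec.subspace W" and UW: "U \<inter> W \<subseteq> {0}"
    and bU: "\<forall>i\<in>J. b i \<in> U" and wW: "\<forall>i\<in>UNIV - J. w i \<in> W"
    and bi: "\<forall>c. (\<Sum>i\<in>J. c i *s b i) = 0 \<longrightarrow> (\<forall>i\<in>J. c i = 0)"
    and wi: "\<forall>c. (\<Sum>i\<in>UNIV - J. c i *s w i) = 0 \<longrightarrow> (\<forall>i\<in>UNIV - J. c i = 0)"
  shows "det (Mx J b w) \<noteq> 0"
proof
  assume "det (Mx J b w) = 0"
  then obtain c i0 where c: "(\<Sum>i\<in>UNIV. c i *s row i (Mx J b w)) = 0" "c i0 \<noteq> 0"
    using dep_if_det_zero by blast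
  let ?u = "\<Sum>i\<in>J. c i *s b i"
  let ?z = "\<Sum>i\<in>UNIV - J. c i *s w i"
  have sum0: "?u + ?z = 0" using c(1) unfolding row_sum_split .
  have uU: "?u \<in> U" using bU by (intro vec.subspace_sum[OF U] vec.subspace_scale[OF U]) auto
  have zW: "?z \<in> W" using wW by (intro vec.subspace_sum[OF W] vec.subspace_scale[OF W]) auto
  have "?u = - ?z" using sum0 by (simp add: eq_neg_iff_add_eq_0)
  then have "?u \<in> W" using zW vec.subspace_neg[OF W] by simp
  then have u0: "?u = 0" using uU UW by auto
  then have z0: "?z = 0" using sum0 by simp
  have "\<forall>i\<in>J. c i = 0" using bi u0 by blast
  moreover have "\<forall>i\<in>UNIV - J. c i = 0" using wi z0 by blast
  ultimately show False using c(2) by blast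
qed

lemma det_Mx_zero:
  fixes b w :: "'n::finite \<Rightarrow> 'a::field^'n"
  assumes "v \<noteq> 0" "v \<in> vec.span (b ` J)" "v \<in> vec.span (w ` (UNIV - J))"
    "inj_on b J" "inj_on w (UNIV - J)"
  shows "det (Mx J b w) = 0"
proof -
  obtain \<alpha> where a: "v = (\<Sum>i\<in>J. \<alpha> i *s b i)"
    using span_indexed[OF assms(4) _ assms(2)] by auto
  obtain \<beta> where be: "v = (\<Sum>i\<in>UNIV - J. \<beta> i *s w i)"
    using span_indexed[OF assms(5) _ assms(3)] by auto
  define c where "c i = (if i \<in> J then \<alpha> i else - \<beta> i)" for i
  have "(\<Sum>i\<in>J. c i *s b i) = v" unfolding a by (rule sum.cong) (auto simp: c_def)
  moreover have "(\<Sum>i\<in>UNIV - J. c i *s w i) = - v"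
    unfolding be by (simp add: c_def sum_negf[symmetric])
  ultimately have s0: "(\<Sum>i\<in>UNIV. c i *s row i (Mx J b w)) = 0" unfolding row_sum_split by simp
  have "\<exists>i0. c i0 \<noteq> 0"
  proof (rule ccontr)
    assume "\<nexists>i0. c i0 \<noteq> 0"
    then have "\<forall>i\<in>J. \<alpha> i = 0" by (auto simp: c_def split: if_splits)
    then have "v = 0" unfolding a by simp
    then show False using assms(1) by simp
  qed
  then show ?thesis using det_zero_if_dep[OF s0] by blast
qed

definition ibasis :: "('a::field^'n) set \<Rightarrow> 'n set \<Rightarrow> ('n \<Rightarrow> 'a^'n) \<Rightarrow> bool" where
  "ibasis V I b \<longleftrightarrow> (\<forall>i\<in>I. b i \<in> V) \<and> V \<subseteq> vec.span (b ` I) \<and> inj_on b I \<and>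
     (\<forall>c. (\<Sum>i\<in>I. c i *s b i) = 0 \<longrightarrow> (\<forall>i\<in>I. c i = 0))"

lemma skew_bound:
  fixes T :: "('a::field^'n^'n) set" and J :: "'n set"
  assumes fin: "finite T"
    and dims: "\<forall>A\<in>T. vec.dim (mim A) = card J"
    and cpr: "\<forall>A\<in>T. mim A \<inter> mker A \<subseteq> {0}"
    and sink: "\<forall>T'\<subseteq>T. T' \<noteq> {} \<longrightarrow> (\<exists>B\<in>T'. \<forall>A\<in>T'. A \<noteq> B \<longrightarrow> (\<exists>v. v \<noteq> 0 \<and> v \<in> mker A \<and> v \<in> mim B))"
  shows "card T \<le> CARD('n) choose card J"
proof -
  have cJ: "card (UNIV - J) = CARD('n) - card J" by (rule card_Diff_subset) auto
  have dimk: "vec.dim (mker A) = card (UNIV - J)" if "A \<in> T" for A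
    using rank_nullity_gen[of A] dims that cJ by auto
  have "\<forall>A\<in>T. \<exists>b. ibasis (mim A) J b"
  proof
    fix A assume "A \<in> T"
    then show "\<exists>b. ibasis (mim A) J b"
      unfolding ibasis_def by (intro indexed_basis[OF mim_subspace _ finite]) (use dims in auto)
  qed
  from bchoice[OF this] obtain bb where bb: "\<forall>A\<in>T. ibasis (mim A) J (bb A)" by blast
  have "\<forall>A\<in>T. \<exists>b. ibasis (mker A) (UNIV - J) b"
  proof
    fix A assume "A \<in> T"
    then show "\<exists>b. ibasis (mker A) (UNIV - J) b"
      unfolding ibasis_def by (intro indexed_basis[OF mker_subspace _ finite]) (use dimk in auto)
  qed
  from bchoice[OF this] obtain ww where ww: "\<forall>A\<in>T. ibasis (mker A) (UNIV - J) (ww A)" by blast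
  define F where "F A x = det (Mx J x (ww A))" for A x
  define \<Phi> where "\<Phi> A = plk J (F A)" for A
  have altF: "\<forall>A\<in>T. alt_form J (F A)" unfolding F_def using alt_det by blast
  have Fself: "F A (bb A) \<noteq> 0" if A: "A \<in> T" for A
  proof -
    have b1: "ibasis (mim A) J (bb A)" and w1: "ibasis (mker A) (UNIV - J) (ww A)"
      and c1: "mim A \<inter> mker A \<subseteq> {0}" using bb ww cpr A by auto
    show ?thesis unfolding F_def
      by (rule det_Mx_nz[OF mim_subspace mker_subspace c1]) (use b1 w1 in \<open>simp_all add: ibasis_def\<close>)
  qed
  have Fzero: "F A (bb B) = 0" if "A \<in> T" "B \<in> T" "v \<noteq> 0" "v \<in> mker A" "v \<in> mim B" for A B v
  proof -
    have b1: "ibasis (mim B) J (bb B)" and w1: "ibasis (mker A) (UNIV - J) (ww A)"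
      using bb ww that by auto
    show ?thesis unfolding F_def
    proof (rule det_Mx_zero[of v])
      show "v \<noteq> 0" by fact
      show "v \<in> vec.span (bb B ` J)" using b1 that(5) unfolding ibasis_def by blast
      show "v \<in> vec.span (ww A ` (UNIV - J))" using w1 that(4) unfolding ibasis_def by blast
      show "inj_on (bb B) J" using b1 unfolding ibasis_def by blast
      show "inj_on (ww A) (UNIV - J)" using w1 unfolding ibasis_def by blast
    qed
  qed
  have coef: "\<forall>A\<in>T0. c A = 0" if sub: "T0 \<subseteq> T" and s0: "(\<Sum>A\<in>T0. c A *s \<Phi> A) = 0" for T0 c
  proof (rule ccontr)
    assume nz: "\<not> (\<forall>A\<in>T0. c A = 0)"
    let ?G = "\<lambda>x. \<Sum>A\<in>T0. c A * F A x"
    have altG: "alt_form J ?G" by (rule alt_sum) (use altF sub in auto)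
    have "plk J ?G = 0" using s0 plk_sum[where J=J and T=T0 and c=c and g=F] unfolding \<Phi>_def by simp
    then have G0: "?G x = 0" for x using plk_zero[OF altG] by blast
    define T' where "T' = {A\<in>T0. c A \<noteq> 0}"
    have T'T: "T' \<subseteq> T" using sub T'_def by auto
    have "T' \<noteq> {}" using nz T'_def by auto
    then obtain B where B: "B \<in> T'" and Bs: "\<forall>A\<in>T'. A \<noteq> B \<longrightarrow> (\<exists>v. v \<noteq> 0 \<and> v \<in> mker A \<and> v \<in> mim B)"
      using sink[rule_format, OF T'T \<open>T' \<noteq> {}\<close>] by blast
    have BT0: "B \<in> T0" and cB: "c B \<noteq> 0" using B T'_def by auto
    have finT0: "finite T0" using sub fin finite_subset by blast
    have "?G (bb B) = c B * F B (bb B) + (\<Sum>A\<in>T0 - {B}. c A * F A (bb B))"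
      by (rule sum.remove[OF finT0 BT0])
    also have "(\<Sum>A\<in>T0 - {B}. c A * F A (bb B)) = 0"
    proof (rule sum.neutral, rule ballI)
      fix A assume A: "A \<in> T0 - {B}"
      show "c A * F A (bb B) = 0"
      proof (cases "c A = 0")
        case False
        then have "A \<in> T'" using A T'_def by auto
        then obtain v where "v \<noteq> 0" "v \<in> mker A" "v \<in> mim B" using Bs A by blast
        moreover have "A \<in> T" "B \<in> T" using A sub BT0 by auto
        ultimately have "F A (bb B) = 0" using Fzero by blast
        then show ?thesis by simp
      qed simp
    qed
    finally have "?G (bb B) = c B * F B (bb B)" by simp
    moreover have "c B * F B (bb B) \<noteq> 0" using cB Fself BT0 sub by auto
    ultimately show False using G0 by simp
  qed
  have inj\<Phi>: "inj_on \<Phi> T"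
  proof (rule inj_onI, rule ccontr)
    fix A1 A2 assume A: "A1 \<in> T" "A2 \<in> T" "\<Phi> A1 = \<Phi> A2" "A1 \<noteq> A2"
    let ?c = "\<lambda>A. if A = A1 then (1::'a) else -1"
    have "(\<Sum>A\<in>{A1, A2}. ?c A *s \<Phi> A) = 0" using A by simp
    then have "\<forall>A\<in>{A1, A2}. ?c A = 0" by (rule coef[rotated]) (use A in auto)
    then show False by simp
  qed
  have indep: "vec.independent (\<Phi> ` T)"
    unfolding vec.independent_explicit
  proof (intro conjI allI impI ballI)
    show "finite (\<Phi> ` T)" using fin by simp
    fix u v assume s: "(\<Sum>v\<in>\<Phi> ` T. u v *s v) = 0" and v: "v \<in> \<Phi> ` T"
    have "(\<Sum>A\<in>T. u (\<Phi> A) *s \<Phi> A) = 0" using s by (simp add: sum.reindex[OF inj\<Phi>])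
    then have "\<forall>A\<in>T. u (\<Phi> A) = 0" by (rule coef[rotated]) simp
    then show "u v = 0" using v by auto
  qed
  have sp: "\<Phi> ` T \<subseteq> vec.span ((\<lambda>S. axis S 1) ` {S. card S = card J})"
    unfolding \<Phi>_def using plk_span by blast
  have "card (\<Phi> ` T) \<le> card ((\<lambda>S. axis S (1::'a)) ` {S::'n set. card S = card J})"
    using vec.independent_span_bound[OF _ indep sp] by simp
  also have "\<dots> \<le> CARD('n) choose card J" by (rule card_axes)
  finally show ?thesis using card_image[OF inj\<Phi>] by simp
qed

lemma cpr_trivial:
  fixes C :: "'a::field^'n^'n"
  assumes "completely_pseudo_regular C"
  shows "mim C \<inter> mker C \<subseteq> {0}"
proof -
  obtain G E where G: "C \<in> G" "E \<in> G"
    and H: "\<forall>A\<in>G. E ** A = A \<and> A ** E = A \<and> (\<exists>A'\<in>G. A ** A' = E \<and> A' ** A = E)"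
    using assms unfolding completely_pseudo_regular_def by blast
  have "E ** C = C" using H G(1) by blast
  moreover obtain C' where "C' ** C = E" using H G(1) by blast
  ultimately have CC: "C' ** C ** C = C" by simp
  show ?thesis
  proof
    fix v assume v: "v \<in> mim C \<inter> mker C"
    then obtain x where x: "v = C *v x" unfolding mim_def by auto
    have Cv: "C *v v = 0" using v unfolding mker_def by auto
    have "v = (C' ** C ** C) *v x" using CC x by simp
    also have "\<dots> = C' *v (C *v v)" using x by (simp add: matrix_vector_mul_assoc matrix_mul_assoc)
    also have "\<dots> = 0" using Cv by simp
    finally show "v \<in> {0}" by simp
  qed
qed

lemma equiv_scc: "equiv R {(A, B). same_scc R A B}"
  unfolding equiv_def refl_on_def sym_def trans_def same_scc_def
  by (auto intro: rtrancl_trans)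

lemma part2_finite_bound:
  fixes R :: "('a::field^'n^'n) set"
  assumes cpr: "\<forall>C\<in>R. completely_pseudo_regular C"
    and sub: "CC \<subseteq> {C \<in> sccs R. \<forall>A\<in>C. rank A = r}" and finCC: "finite CC"
  shows "card CC \<le> CARD('n) choose r"
proof -
  let ?rel = "{(A, B). same_scc R A B}"
  have eq: "equiv R ?rel" by (rule equiv_scc)
  define \<rho> where "\<rho> C = (SOME A. A \<in> C)" for C :: "('a^'n^'n) set"
  have \<rho>C: "\<rho> C \<in> C" if "C \<in> CC" for C
  proof -
    have "C \<noteq> {}" using in_quotient_imp_non_empty[OF eq] sub that unfolding sccs_def by auto
    then show ?thesis unfolding \<rho>_def by (simp add: some_in_eq)
  qed
  have CCq: "C \<in> R // ?rel" if "C \<in> CC" for C using sub that unfolding sccs_def by auto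
  have \<rho>R: "\<rho> C \<in> R" if "C \<in> CC" for C
    using in_quotient_imp_subset[OF eq CCq[OF that]] \<rho>C[OF that] by auto
  have \<rho>rank: "rank (\<rho> C) = r" if "C \<in> CC" for C using sub that \<rho>C[OF that] by auto
  have sameD: "C1 = C2" if "C1 \<in> CC" "C2 \<in> CC" "same_scc R (\<rho> C1) (\<rho> C2)" for C1 C2
    using quotient_eq_iff[OF eq CCq[OF that(1)] CCq[OF that(2)] \<rho>C[OF that(1)] \<rho>C[OF that(2)]] that(3)
    by auto
  have inj: "inj_on \<rho> CC"
  proof (rule inj_onI)
    fix C1 C2 assume h: "C1 \<in> CC" "C2 \<in> CC" "\<rho> C1 = \<rho> C2"
    have "same_scc R (\<rho> C1) (\<rho> C1)" using \<rho>R[OF h(1)] unfolding same_scc_def by auto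
    then show "C1 = C2" using sameD[OF h(1,2)] h(3) by simp
  qed
  show ?thesis
  proof (cases "CC = {}")
    case True then show ?thesis by simp
  next
    case False
    then obtain C0 where C0: "C0 \<in> CC" by blast
    have "r = vec.dim (mim (\<rho> C0))" using \<rho>rank[OF C0] rank_dim_mim by metis
    also have "\<dots> \<le> vec.dim (UNIV :: ('a^'n) set)" by (rule vec.dim_subset) simp
    finally have rle: "r \<le> CARD('n)" by (simp add: vec_dim_card card_cart_basis)
    obtain J :: "'n set" where J: "card J = r"
      using obtain_subset_with_card_n[of r "UNIV :: 'n set"] rle by auto
    let ?T = "\<rho> ` CC"
    have "card ?T \<le> CARD('n) choose card J"
    proof (rule skew_bound)
      show "finite ?T" using finCC by simp
      show "\<forall>A\<in>?T. vec.dim (mim A) = card J" using \<rho>rank J by (auto simp flip: rank_dim_mim)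
      show "\<forall>A\<in>?T. mim A \<inter> mker A \<subseteq> {0}" using \<rho>R cpr cpr_trivial by blast
      show "\<forall>T'\<subseteq>?T. T' \<noteq> {} \<longrightarrow> (\<exists>B\<in>T'. \<forall>A\<in>T'. A \<noteq> B \<longrightarrow> (\<exists>v. v \<noteq> 0 \<and> v \<in> mker A \<and> v \<in> mim B))"
      proof (intro allI impI)
        fix T' assume T': "T' \<subseteq> ?T" "T' \<noteq> {}"
        have finT': "finite T'" using T'(1) finCC finite_subset by blast
        let ?E = "(graph_edges R)\<^sup>*"
        define m where "m B = card {A \<in> T'. (B, A) \<in> ?E}" for B
        obtain B0 where "B0 \<in> T'" using T'(2) by blast
        then obtain B where B: "B \<in> T'" and Bmin: "\<forall>y. y \<in> T' \<longrightarrow> m B \<le> m y"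
          using ex_has_least_nat[of "\<lambda>B. B \<in> T'" B0 m] by blast
        show "\<exists>B\<in>T'. \<forall>A\<in>T'. A \<noteq> B \<longrightarrow> (\<exists>v. v \<noteq> 0 \<and> v \<in> mker A \<and> v \<in> mim B)"
        proof (intro bexI[OF _ B] ballI impI)
          fix A assume A: "A \<in> T'" "A \<noteq> B"
          show "\<exists>v. v \<noteq> 0 \<and> v \<in> mker A \<and> v \<in> mim B"
          proof (rule ccontr)
            assume nv: "\<not> (\<exists>v. v \<noteq> 0 \<and> v \<in> mker A \<and> v \<in> mim B)"
            obtain CA where CA: "CA \<in> CC" "A = \<rho> CA" using A(1) T'(1) by auto
            obtain CB where CB: "CB \<in> CC" "B = \<rho> CB" using B T'(1) by auto
            have AR: "A \<in> R" and BR: "B \<in> R" using CA CB \<rho>R by auto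
            have "mker A \<inter> mim B = {0}" using nv by auto
            then have "(B, A) \<in> graph_edges R" unfolding graph_edges_def using AR BR by auto
            then have BA: "(B, A) \<in> ?E" by simp
            have AB: "(A, B) \<notin> ?E"
            proof
              assume "(A, B) \<in> ?E"
              then have "same_scc R B A" using BA AR BR unfolding same_scc_def by auto
              then have "CB = CA" using sameD[OF CB(1) CA(1)] CA CB by simp
              then show False using A(2) CA CB by simp
            qed
            have "{X \<in> T'. (A, X) \<in> ?E} \<subset> {X \<in> T'. (B, X) \<in> ?E}"
            proof
              show "{X \<in> T'. (A, X) \<in> ?E} \<subseteq> {X \<in> T'. (B, X) \<in> ?E}"
                using BA by (auto intro: rtrancl_trans)
              have "B \<in> {X \<in> T'. (B, X) \<in> ?E}" using B by simp
              moreover have "B \<notin> {X \<in> T'. (A, X) \<in> ?E}" using AB by simp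
              ultimately show "{X \<in> T'. (A, X) \<in> ?E} \<noteq> {X \<in> T'. (B, X) \<in> ?E}" by blast
            qed
            then have "m A < m B" unfolding m_def by (rule psubset_card_mono[rotated]) (use finT' in simp)
            then show False using Bmin A(1) by (meson not_le)
          qed
        qed
      qed
    qed
    then show ?thesis using card_image[OF inj] J by simp
  qed
qed

lemma part2:
  fixes R :: "('a::field^'n^'n) set"
  assumes cpr: "\<forall>C\<in>R. completely_pseudo_regular C"
  shows "finite {C \<in> sccs R. \<forall>A\<in>C. rank A = r} \<and>
         card {C \<in> sccs R. \<forall>A\<in>C. rank A = r} \<le> CARD('n) choose r"
proof
  let ?CC = "{C \<in> sccs R. \<forall>A\<in>C. rank A = r}"
  show fin: "finite ?CC"
  proof (rule ccontr)
    assume "infinite ?CC"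
    then obtain B where B: "finite B" "card B = Suc (CARD('n) choose r)" "B \<subseteq> ?CC"
      using infinite_arbitrarily_large by blast
    have "card B \<le> CARD('n) choose r" by (rule part2_finite_bound[OF cpr B(3) B(1)])
    then show False using B(2) by simp
  qed
  show "card ?CC \<le> CARD('n) choose r" by (rule part2_finite_bound[OF cpr subset_refl fin])
qed

theorem lemmaV16:
  fixes X R :: "('a::field_char_0 ^ 'n ^ 'n) set"
  assumes "number_field_type TYPE('a)"
    and "linear_zariski_closed X"
    and "R \<subseteq> gen_semigroup X"
    and "\<forall>C\<in>R. completely_pseudo_regular C"
  shows "(\<forall>A B. same_scc R A B \<longrightarrow> sim_S (gen_semigroup X) A B) \<and>
         (\<forall>r. finite {C \<in> sccs R. \<forall>A\<in>C. rank A = r} \<and>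
              card {C \<in> sccs R. \<forall>A\<in>C. rank A = r} \<le> CARD('n) choose r)"
  using part1[OF _ assms(3)] part2[OF assms(4)] by blast

end
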